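(* For every positive integer $n$ and every $u\in S_n$, \[ t^{\mathrm{des}(u)}q^{\mathrm{maj}(u)}\prod_{i=1}^n (1+tq^i) = \sum_{w \in B'(u)} t^{\mathrm{fdes}(w)}q^{\mathrm{fmaj}(w)}.\]
   Context: $S_n$ is the set of permutations of $[n]=\{1,\dots,n\}$, written as words $u=u_1\cdots u_n$. $B_n$ is the set of signed permutations: words $w=w_1\cdots w_n$ on the alphabet $\{\bar 1,1,\dots,\bar n,n\}$ (where $\bar i=-i$) such that $|w|:=|w_1|\cdots|w_n|$ is a permutation in $S_n$. The alphabet is totally ordered by $\bar 1<\bar 2<\cdots<\bar n<1<2<\cdots<n$. For a word $w$ over a totally ordered alphabet, $\mathrm{Des}(w)=\{i: w_i>w_{i+1}\}$, $\mathrm{des}(w)=|\mathrm{Des}(w)|$, and $\mathrm{maj}(w)=\sum_{i\in\mathrm{Des}(w)} i$. For $w\in B_n$: $\mathrm{fdes}(w)=2\,\mathrm{des}(w)+1$ if $w_1<0$ and $\mathrm{fdes}(w)=2\,\mathrm{des}(w)$ if $w_1>0$; $\mathrm{fmaj}(w)=2\,\mathrm{maj}(w)+|\{i:w_i<0\}|$. For $u\in S_n$, $B'(u)=\{w\in B_n: |w|=u\}$. *)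

theory Defs
  imports Main
begin

text \<open>Words are lists; positions are 1-indexed as in the paper, so position i
  refers to the list element w ! (i - 1).\<close>

definition Des :: "('a \<Rightarrow> 'a \<Rightarrow> bool) \<Rightarrow> 'a list \<Rightarrow> nat set" where
  "Des lt w = {i. 1 \<le> i \<and> i < length w \<and> lt (w ! i) (w ! (i - 1))}"

definition des :: "('a \<Rightarrow> 'a \<Rightarrow> bool) \<Rightarrow> 'a list \<Rightarrow> nat" where
  "des lt w = card (Des lt w)"

definition maj :: "('a \<Rightarrow> 'a \<Rightarrow> bool) \<Rightarrow> 'a list \<Rightarrow> nat" where
  "maj lt w = (\<Sum>i\<in>Des lt w. i)"

definition S :: "nat \<Rightarrow> nat list set" where
  "S n = {u. distinct u \<and> set u = {1..n}}"

text \<open>The total order bar1 < bar2 < ... < bar n < 1 < 2 < ... < n on signed letters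
  (a barred letter bar i is represented by the integer -i).\<close>
definition signed_less :: "int \<Rightarrow> int \<Rightarrow> bool" where
  "signed_less x y \<longleftrightarrow>
     (x < 0 \<and> 0 < y) \<or> (x < 0 \<and> y < 0 \<and> \<bar>x\<bar> < \<bar>y\<bar>) \<or> (0 < x \<and> 0 < y \<and> x < y)"

definition Bprime :: "nat list \<Rightarrow> int list set" where
  "Bprime u = {w. map (\<lambda>x. nat \<bar>x\<bar>) w = u}"

definition fdes :: "int list \<Rightarrow> nat" where
  "fdes w = 2 * des signed_less w + (if hd w < 0 then 1 else 0)"

definition fmaj :: "int list \<Rightarrow> nat" where
  "fmaj w = 2 * maj signed_less w + card {i. i < length w \<and> w ! i < 0}"

end

theory Submission
  imports Defs
begin

lemma Des_snoc:
  "Des lt (w @ [x]) = Des lt w \<union> (if w \<noteq> [] \<and> lt x (last w) then {length w} else {})"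
proof (rule set_eqI)
  fix i
  show "i \<in> Des lt (w @ [x]) \<longleftrightarrow> i \<in> Des lt w \<union> (if w \<noteq> [] \<and> lt x (last w) then {length w} else {})"
  proof (cases "w = []")
    case True then show ?thesis by (auto simp: Des_def)
  next
    case False
    then have l: "last w = w ! (length w - 1)" by (simp add: last_conv_nth)
    show ?thesis
      by (cases "i < length w"; cases "i = length w")
         (use False in \<open>auto simp: Des_def nth_append l Suc_leI\<close>)
  qed
qed

lemma Des_fin: "finite (Des lt w)" and Des_notin: "length w \<notin> Des lt w"
  by (auto simp: Des_def intro: finite_subset[of _ "{..<length w}"])

lemma des_snoc:
  "des lt (w @ [x]) = des lt w + (if w \<noteq> [] \<and> lt x (last w) then 1 else 0)"
  using Des_fin[of lt w] Des_notin[of w lt] by (simp add: des_def Des_snoc)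

lemma maj_snoc:
  "maj lt (w @ [x]) = maj lt w + (if w \<noteq> [] \<and> lt x (last w) then length w else 0)"
  using Des_fin[of lt w] Des_notin[of w lt] by (simp add: maj_def Des_snoc)

lemma neg_snoc:
  "card {i. i < length (w @ [x]) \<and> (w @ [x]) ! i < 0} =
   card {i. i < length w \<and> w ! i < 0} + (if x < 0 then 1 else 0)"
proof -
  have "{i. i < length (w @ [x]) \<and> (w @ [x]) ! i < 0} =
        {i. i < length w \<and> w ! i < 0} \<union> (if x < 0 then {length w} else {})"
    by (auto simp: nth_append less_Suc_eq)
  moreover have "finite {i. i < length w \<and> w ! i < 0}" by auto
  ultimately show ?thesis by auto
qed

definition G :: "'a::comm_ring_1 \<Rightarrow> 'a \<Rightarrow> int list \<Rightarrow> 'a" where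
  "G t q w = t ^ fdes w * q ^ fmaj w"

definition E :: "'a::comm_ring_1 \<Rightarrow> 'a \<Rightarrow> nat list \<Rightarrow> 'a" where
  "E t q u = t ^ des (<) u * q ^ maj (<) u"

definition P :: "'a::comm_ring_1 \<Rightarrow> 'a \<Rightarrow> nat \<Rightarrow> 'a" where
  "P t q n = (\<Prod>i = 1..n. 1 + t * q ^ i)"

lemma G_snoc:
  assumes "w \<noteq> []"
  shows "G t q (w @ [x]) = G t q w * (if signed_less x (last w) then t^2 * q^(2 * length w) else 1)
           * (if x < 0 then q else 1)"
proof -
  have h: "hd (w @ [x]) = hd w" using assms by simp
  have d: "des signed_less (w @ [x]) = des signed_less w + (if signed_less x (last w) then 1 else 0)"
    using assms by (simp add: des_snoc)
  have m: "maj signed_less (w @ [x]) = maj signed_less w + (if signed_less x (last w) then length w else 0)"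
    using assms by (simp add: maj_snoc)
  have f1: "fdes (w @ [x]) = fdes w + (if signed_less x (last w) then 2 else 0)"
    unfolding fdes_def h d by simp
  have f2: "fmaj (w @ [x]) = fmaj w + (if signed_less x (last w) then 2 * length w else 0)
      + (if x < 0 then 1 else 0)"
    unfolding fmaj_def m neg_snoc by simp
  show ?thesis unfolding G_def f1 f2
    by (simp add: power_add power_mult algebra_simps)
qed

lemma E_snoc:
  assumes "u \<noteq> []"
  shows "E t q (u @ [a]) = E t q u * (if a < last u then t * q^(length u) else 1)"
  using assms by (simp add: E_def des_snoc maj_snoc power_add algebra_simps)

lemma Bprime_Nil: "Bprime [] = {[]}"
  by (auto simp: Bprime_def)

lemma Bprime_snoc:
  "Bprime (u @ [a]) = (\<lambda>w. w @ [int a]) ` Bprime u \<union> (\<lambda>w. w @ [- int a]) ` Bprime u"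
proof (rule set_eqI)
  fix v
  show "v \<in> Bprime (u @ [a]) \<longleftrightarrow> v \<in> (\<lambda>w. w @ [int a]) ` Bprime u \<union> (\<lambda>w. w @ [- int a]) ` Bprime u"
  proof
    assume "v \<in> Bprime (u @ [a])"
    then have "map (\<lambda>x. nat \<bar>x\<bar>) v = u @ [a]" by (simp add: Bprime_def)
    then obtain us x where "v = us @ [x]" "map (\<lambda>x. nat \<bar>x\<bar>) us = u" "nat \<bar>x\<bar> = a"
      by (auto simp: map_eq_append_conv)
    moreover have "x = int a \<or> x = - int a" using \<open>nat \<bar>x\<bar> = a\<close> by auto
    ultimately show "v \<in> (\<lambda>w. w @ [int a]) ` Bprime u \<union> (\<lambda>w. w @ [- int a]) ` Bprime u"
      by (auto simp: Bprime_def)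
  next
    assume "v \<in> (\<lambda>w. w @ [int a]) ` Bprime u \<union> (\<lambda>w. w @ [- int a]) ` Bprime u"
    then show "v \<in> Bprime (u @ [a])" by (auto simp: Bprime_def)
  qed
qed

lemma Bprime_finite: "finite (Bprime u)"
  by (induction u rule: rev_induct) (auto simp: Bprime_Nil Bprime_snoc)

lemma Bprime_last:
  assumes "w \<in> Bprime u" "u \<noteq> []"
  shows "w \<noteq> [] \<and> nat \<bar>last w\<bar> = last u"
  using assms by (auto simp: Bprime_def last_map)

lemma split_sum:
  assumes "u \<noteq> []" "0 \<notin> set u"
  shows "(\<Sum>w\<in>Bprime u. f w) = (\<Sum>w\<in>Bprime u. if last w > 0 then f w else 0)
           + (\<Sum>w\<in>Bprime u. if last w < 0 then f w else 0)"
proof -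
  have "f w = (if last w > 0 then f w else 0) + (if last w < 0 then f w else 0)"
    if "w \<in> Bprime u" for w
  proof -
    have "nat \<bar>last w\<bar> = last u" using Bprime_last[OF that assms(1)] by simp
    moreover have "last u \<noteq> 0" using assms by (metis last_in_set)
    ultimately have "last w \<noteq> 0" by auto
    then show ?thesis by auto
  qed
  then show ?thesis by (simp add: sum.distrib[symmetric] cong: sum.cong)
qed

lemma key:
  fixes t q :: "'a::comm_ring_1"
  assumes "u \<noteq> []" "0 \<notin> set u"
  shows "(\<Sum>w\<in>Bprime u. if last w > 0 then G t q w else 0) = E t q u * P t q (length u - 1)
       \<and> (\<Sum>w\<in>Bprime u. if last w < 0 then G t q w else 0)
            = E t q u * (t * q ^ length u) * P t q (length u - 1)"
  using assms
proof (induction u rule: rev_induct)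
  case Nil then show ?case by simp
next
  case (snoc a u)
  have a0: "a > 0" using snoc.prems by auto
  show ?case
  proof (cases "u = []")
    case True
    have B: "Bprime [a] = {[int a], [- int a]}"
      using Bprime_snoc[of "[]" a] by (auto simp: Bprime_Nil)
    have "[int a] \<noteq> [- int a]" using a0 by simp
    have D1: "Des lt [x] = {}" for lt and x :: 'b by (auto simp: Des_def)
    have c1: "{i. i < length [x] \<and> [x] ! i < 0} = (if x < 0 then {0} else {})" for x :: int
      by auto
    then show ?thesis using True a0
      by (simp add: B D1 c1 G_def E_def P_def fdes_def fmaj_def des_def maj_def)
  next
    case False
    have u0: "0 \<notin> set u" using snoc.prems by auto
    note IH = snoc.IH[OF False u0]
    define S where "S = Bprime u"
    define A where "A = (\<Sum>w\<in>S. if last w > 0 then G t q w else 0)"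
    define B where "B = (\<Sum>w\<in>S. if last w < 0 then G t q w else 0)"
    define n where "n = length u"
    define X where "X = t^2 * q^(2*n)"
    have fS: "finite S" unfolding S_def by (rule Bprime_finite)
    have lu: "last u \<noteq> 0" using u0 False by (metis last_in_set)
    have lastw: "w \<noteq> [] \<and> (last w = int (last u) \<or> last w = - int (last u)) \<and> length w = length u"
      if "w \<in> S" for w
      using Bprime_last[OF that[unfolded S_def] False] that
      by (auto simp: S_def Bprime_def dest: arg_cong[of _ _ length])
    have inj1: "inj_on (\<lambda>w. w @ [int a]) S" and inj2: "inj_on (\<lambda>w. w @ [- int a]) S"
      by (auto intro: inj_onI)
    have disj: "(\<lambda>w. w @ [int a]) ` S \<inter> (\<lambda>w. w @ [- int a]) ` S = {}"
      using a0 by auto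
    have BS: "Bprime (u @ [a]) = (\<lambda>w. w @ [int a]) ` S \<union> (\<lambda>w. w @ [- int a]) ` S"
      unfolding S_def by (rule Bprime_snoc)
    have sumBS: "(\<Sum>w\<in>Bprime (u @ [a]). f w) = (\<Sum>w\<in>S. f (w @ [int a])) + (\<Sum>w\<in>S. f (w @ [- int a]))"
      for f :: "int list \<Rightarrow> 'a"
      unfolding BS using fS inj1 inj2 disj
      by (simp add: sum.union_disjoint sum.reindex)
    have splitS: "(\<Sum>w\<in>S. f w) = (\<Sum>w\<in>S. if last w > 0 then f w else 0)
           + (\<Sum>w\<in>S. if last w < 0 then f w else 0)" for f :: "int list \<Rightarrow> 'a"
      unfolding S_def using False u0 by (rule split_sum)
    have Gp: "(\<Sum>w\<in>S. G t q (w @ [int a])) = (if a < last u then X else 1) * A + B"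
    proof -
      have "(\<Sum>w\<in>S. G t q (w @ [int a])) =
          (\<Sum>w\<in>S. if last w > 0 then G t q (w @ [int a]) else 0)
           + (\<Sum>w\<in>S. if last w < 0 then G t q (w @ [int a]) else 0)" by (rule splitS)
      also have "(\<Sum>w\<in>S. if last w > 0 then G t q (w @ [int a]) else 0)
          = (\<Sum>w\<in>S. (if a < last u then X else 1) * (if last w > 0 then G t q w else 0))"
        apply (rule sum.cong, simp)
        subgoal for w using lastw[of w] a0 lu
          by (auto simp: G_snoc signed_less_def X_def n_def)
        done
      also have "(\<Sum>w\<in>S. if last w < 0 then G t q (w @ [int a]) else 0)
          = (\<Sum>w\<in>S. (if last w < 0 then G t q w else 0))"
        apply (rule sum.cong, simp)
        subgoal for w using lastw[of w] a0 lu
          by (auto simp: G_snoc signed_less_def)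
        done
      finally show ?thesis by (simp add: A_def B_def sum_distrib_left)
    qed
    have Gm: "(\<Sum>w\<in>S. G t q (w @ [- int a])) = q * (X * A + (if a < last u then X else 1) * B)"
    proof -
      have "(\<Sum>w\<in>S. G t q (w @ [- int a])) =
          (\<Sum>w\<in>S. if last w > 0 then G t q (w @ [- int a]) else 0)
           + (\<Sum>w\<in>S. if last w < 0 then G t q (w @ [- int a]) else 0)" by (rule splitS)
      also have "(\<Sum>w\<in>S. if last w > 0 then G t q (w @ [- int a]) else 0)
          = (\<Sum>w\<in>S. (q * X) * (if last w > 0 then G t q w else 0))"
        apply (rule sum.cong, simp)
        subgoal for w using lastw[of w] a0 lu
          by (auto simp: G_snoc signed_less_def X_def n_def)
        done
      also have "(\<Sum>w\<in>S. if last w < 0 then G t q (w @ [- int a]) else 0)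
          = (\<Sum>w\<in>S. (q * (if a < last u then X else 1)) * (if last w < 0 then G t q w else 0))"
        apply (rule sum.cong, simp)
        subgoal for w using lastw[of w] a0 lu
          by (auto simp: G_snoc signed_less_def X_def n_def)
        done
      finally show ?thesis by (simp add: A_def B_def sum_distrib_left[symmetric] algebra_simps)
    qed
    have pos: "(\<Sum>w\<in>Bprime (u @ [a]). if last w > 0 then G t q w else 0)
       = (if a < last u then X else 1) * A + B"
      using a0 by (simp add: sumBS Gp)
    have neg: "(\<Sum>w\<in>Bprime (u @ [a]). if last w < 0 then G t q w else 0)
       = q * (X * A + (if a < last u then X else 1) * B)"
      using a0 by (simp add: sumBS Gm)
    have A': "A = E t q u * P t q (n - 1)" and B': "B = E t q u * (t * q ^ n) * P t q (n - 1)"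
      using IH by (simp_all add: A_def B_def S_def n_def)
    have n1: "n \<ge> 1" using False by (simp add: n_def Suc_leI)
    have Pn: "P t q n = P t q (n - 1) * (1 + t * q ^ n)"
    proof -
      have "n = Suc (n - 1)" using n1 by simp
      then have "{1..n} = insert n {1..n-1}" by auto
      then show ?thesis unfolding P_def using n1 by (simp add: mult.commute)
    qed
    have Es: "E t q (u @ [a]) = E t q u * (if a < last u then t * q^n else 1)"
      using E_snoc[OF False, of t q a] by (simp add: n_def)
    have l1: "length (u @ [a]) - 1 = n" and l2: "length (u @ [a]) = Suc n" by (simp_all add: n_def)
    have Pn': "P t q (length (u @ [a]) - 1) = P t q (n - 1) * (1 + t * q ^ n)"
      using Pn by (simp add: n_def)
    show ?thesis
      unfolding pos neg A' B' Es Pn'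
      using n_def by (auto simp: l2 X_def power_add power_mult_distrib power2_eq_square
          power_mult algebra_simps)
  qed
qed

theorem theorem7:
  fixes n :: nat and u :: "nat list" and t q :: "'a :: comm_ring_1"
  assumes "0 < n" and "u \<in> S n"
  shows "t ^ des (<) u * q ^ maj (<) u * (\<Prod>i = 1..n. 1 + t * q ^ i)
         = (\<Sum>w\<in>Bprime u. t ^ fdes w * q ^ fmaj w)"
proof -
  have su: "set u = {1..n}" "distinct u" using assms(2) by (auto simp: S_def)
  have len: "length u = n" using su distinct_card[OF su(2)] by simp
  have ne: "u \<noteq> []" using len assms(1) by auto
  have z: "0 \<notin> set u" using su by auto
  note K = key[OF ne z, of t q]
  have "(\<Sum>w\<in>Bprime u. t ^ fdes w * q ^ fmaj w) = (\<Sum>w\<in>Bprime u. G t q w)"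
    by (simp add: G_def)
  also have "\<dots> = E t q u * P t q (n - 1) + E t q u * (t * q ^ n) * P t q (n - 1)"
    using split_sum[OF ne z, of "G t q"] K len by simp
  also have "\<dots> = E t q u * P t q n"
  proof -
    have "n = Suc (n - 1)" using assms(1) by simp
    then have "{1..n} = insert n {1..n-1}" by auto
    then have "P t q n = P t q (n - 1) * (1 + t * q ^ n)" unfolding P_def using assms(1)
      by (simp add: mult.commute)
    then show ?thesis by (simp add: algebra_simps)
  qed
  finally show ?thesis by (simp add: E_def P_def)
qed

end
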